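(* Let $R=k\langle x_1,\dots,x_n\rangle/(S)$ be a quadratic monomial algebra, $S$ a set of monomials $x_ix_j$, and suppose $R$ is initially Koszul with Groebner flag $(x_1,\dots,x_n)$. Let $R^!=k\langle x_1^*,\dots,x_n^*\rangle/(\{x_i^*x_j^* : x_ix_j\notin S\})$ be its quadratic dual algebra. Then $R^!$ is initially Koszul with Groebner flag $(x_n^*,\dots,x_1^* )$.
   Context: For a standard algebra $A$ (graded, $A_0=k$, generated by $A_1$) and a basis $y_1,\dots,y_n$ of $A_1$, let $I_k=y_1A+\dots+y_kA$ ($I_0=0$). $A$ is initially Koszul with Groebner flag $(y_1,\dots,y_n)$ if for each $1\le k\le n$ the right ideal $\{a\in A: y_ka\in I_{k-1}\}$ equals $I_j$ for some $j$ (equivalently $\{I_0,\dots,I_n\}$ is a Koszul filtration). *)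

theory Defs
  imports Main
begin

text \<open>Free associative algebra k<x_1,...,x_n> over a field 'k: elements are finitely
supported coefficient functions on words (lists of variable indices in {1..n}).\<close>

definition free_alg :: "'k::field itself \<Rightarrow> nat \<Rightarrow> (nat list \<Rightarrow> 'k) set" where
  "free_alg K n = {f. finite {w. f w \<noteq> 0} \<and> {w. f w \<noteq> 0} \<subseteq> lists {1..n}}"

definition mono :: "nat list \<Rightarrow> (nat list \<Rightarrow> 'k::field)" where
  "mono u = (\<lambda>w. if w = u then 1 else 0)"

definition var :: "nat \<Rightarrow> (nat list \<Rightarrow> 'k::field)" where
  "var i = mono [i]"

definition fmul :: "(nat list \<Rightarrow> 'k::field) \<Rightarrow> (nat list \<Rightarrow> 'k) \<Rightarrow> (nat list \<Rightarrow> 'k)" where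
  "fmul f g = (\<lambda>w. \<Sum>m\<le>length w. f (take m w) * g (drop m w))"

definition lspan :: "(nat list \<Rightarrow> 'k::field) set \<Rightarrow> (nat list \<Rightarrow> 'k) set" where
  "lspan B = {(\<lambda>w. \<Sum>b\<in>T. c b * b w) | T c. finite T \<and> T \<subseteq> B}"

definition mon_ideal :: "'k::field itself \<Rightarrow> nat \<Rightarrow> (nat \<times> nat) set \<Rightarrow> (nat list \<Rightarrow> 'k) set" where
  "mon_ideal K n S = lspan {fmul (fmul a (fmul (var i) (var j))) b | a b i j.
       a \<in> free_alg K n \<and> b \<in> free_alg K n \<and> (i, j) \<in> S}"

text \<open>Preimage in the free algebra of the right ideal I_m = y_1 R + ... + y_m R of
R = k<x>/(S), for a flag ys of variables (y_l = x_(ys!(l-1))).\<close>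
definition flag_ideal :: "'k::field itself \<Rightarrow> nat \<Rightarrow> (nat \<times> nat) set \<Rightarrow> nat list \<Rightarrow> nat \<Rightarrow> (nat list \<Rightarrow> 'k) set" where
  "flag_ideal K n S ys m = lspan ({fmul (var (ys ! l)) a | l a. l < m \<and> a \<in> free_alg K n}
                                 \<union> mon_ideal K n S)"

text \<open>R = k<x_1..x_n>/(S) is initially Koszul with Groebner flag (x_(ys!0), ..., x_(ys!(n-1))),
where ys is an ordering of the variables (hence a basis of R_1).
The condition {a in R. y_k a in I_(k-1)} = I_j is expressed through preimages in the free
algebra (all sets involved contain (S)).\<close>
definition init_koszul_mon :: "'k::field itself \<Rightarrow> nat \<Rightarrow> (nat \<times> nat) set \<Rightarrow> nat list \<Rightarrow> bool" where
  "init_koszul_mon K n S ys \<longleftrightarrow> distinct ys \<and> set ys = {1..n} \<and>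
     (\<forall>k\<in>{1..length ys}. \<exists>j\<le>length ys.
        {a \<in> free_alg K n. fmul (var (ys ! (k - 1))) a \<in> flag_ideal K n S ys (k - 1)}
          = flag_ideal K n S ys j)"

definition dual_rel :: "nat \<Rightarrow> (nat \<times> nat) set \<Rightarrow> (nat \<times> nat) set" where
  "dual_rel n S = ({1..n} \<times> {1..n}) - S"

end

theory Submission
  imports Defs
begin

definition hasf :: "(nat \<times> nat) set \<Rightarrow> nat list \<Rightarrow> bool" where
  "hasf S w = (\<exists>i. Suc i < length w \<and> (w!i, w!Suc i) \<in> S)"

definition wspan :: "nat list set \<Rightarrow> (nat list \<Rightarrow> 'k::field) set" where
  "wspan P = {f. finite {w. f w \<noteq> 0} \<and> {w. f w \<noteq> 0} \<subseteq> P}"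

definition PW :: "(nat \<times> nat) set \<Rightarrow> nat list \<Rightarrow> nat \<Rightarrow> nat \<Rightarrow> nat list set" where
  "PW S ys m n = {w \<in> lists {1..n}. hasf S w \<or> (w \<noteq> [] \<and> hd w \<in> set (take m ys))}"

lemma hasf_Cons: "hasf S (y#u) \<longleftrightarrow> hasf S u \<or> (u \<noteq> [] \<and> (y, hd u) \<in> S)"
proof
  assume "hasf S (y#u)"
  then obtain i where i: "Suc i < length (y#u)" "((y#u)!i, (y#u)!Suc i) \<in> S"
    unfolding hasf_def by blast
  show "hasf S u \<or> (u \<noteq> [] \<and> (y, hd u) \<in> S)"
  proof (cases i)
    case 0 then show ?thesis using i by (cases u) auto
  next
    case (Suc i') then show ?thesis using i unfolding hasf_def by auto
  qed
next
  assume "hasf S u \<or> (u \<noteq> [] \<and> (y, hd u) \<in> S)"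
  then show "hasf S (y#u)"
  proof
    assume "hasf S u"
    then obtain i where "Suc i < length u" "(u!i, u!Suc i) \<in> S" unfolding hasf_def by blast
    then show ?thesis unfolding hasf_def by (intro exI[of _ "Suc i"]) auto
  next
    assume "u \<noteq> [] \<and> (y, hd u) \<in> S"
    then show ?thesis unfolding hasf_def by (intro exI[of _ 0]) (cases u, auto)
  qed
qed

lemma hasf_Nil[simp]: "\<not> hasf S []" and hasf_single[simp]: "\<not> hasf S [i]"
  unfolding hasf_def by auto

lemma hasf_app: "(i, j) \<in> S \<Longrightarrow> hasf S (u @ [i, j] @ v)"
  unfolding hasf_def by (intro exI[of _ "length u"]) (auto simp: nth_append)

lemma hasf_split: "hasf S w \<Longrightarrow> \<exists>u i j v. w = u @ [i, j] @ v \<and> (i, j) \<in> S"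
proof -
  assume "hasf S w"
  then obtain i where i: "Suc i < length w" "(w!i, w!Suc i) \<in> S" unfolding hasf_def by blast
  have "w = take i w @ [w!i, w!Suc i] @ drop (Suc (Suc i)) w"
    using i(1) by (metis Cons_nth_drop_Suc Suc_lessD append_Cons append_Nil append_take_drop_id)
  then show ?thesis using i(2) by blast
qed

lemma mono_inj: "inj (mono :: nat list \<Rightarrow> nat list \<Rightarrow> 'k::field)"
proof (rule injI)
  fix u v assume "(mono u :: nat list \<Rightarrow> 'k) = mono v"
  then have "(mono u :: nat list \<Rightarrow> 'k) u = mono v u" by simp
  then show "u = v" unfolding mono_def by (auto split: if_splits)
qed

lemma supp_mono: "{w. (mono u :: nat list \<Rightarrow> 'k::field) w \<noteq> 0} = {u}"
  unfolding mono_def by auto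

lemma mono_in_wspan: "((mono w :: nat list \<Rightarrow> 'k::field) \<in> wspan P) \<longleftrightarrow> w \<in> P"
  unfolding wspan_def by (simp add: supp_mono)

lemma wspan_inj:
  assumes "(wspan P :: (nat list \<Rightarrow> 'k::field) set) = wspan P'"
  shows "P = P'"
proof -
  have "w \<in> P \<longleftrightarrow> w \<in> P'" for w
    using mono_in_wspan[of w P, where 'k='k] mono_in_wspan[of w P', where 'k='k] assms by simp
  then show ?thesis by blast
qed

lemma fmul_var: "fmul (var y) a = (\<lambda>w. if w \<noteq> [] \<and> hd w = y then a (tl w) else 0)"
proof (rule ext)
  fix w show "fmul (var y) a w = (if w \<noteq> [] \<and> hd w = y then a (tl w) else 0)"
  proof (cases w)
    case Nil then show ?thesis by (simp add: fmul_def var_def mono_def)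
  next
    case (Cons x u)
    have "fmul (var y) a w = (\<Sum>m\<le>Suc (length u). var y (take m (x#u)) * a (drop m (x#u)))"
      unfolding fmul_def Cons by simp
    also have "\<dots> = var y [] * a (x#u) + (\<Sum>m\<le>length u. var y (x # take m u) * a (drop m u))"
      by (subst sum.atMost_Suc_shift) simp
    also have "\<dots> = (\<Sum>m\<le>length u. var y (x # take m u) * a (drop m u))"
      by (simp add: var_def mono_def)
    also have "\<dots> = (\<Sum>m\<le>length u. if m = 0 then (if x = y then a u else 0) else 0)"
      by (rule sum.cong) (auto simp: var_def mono_def)
    also have "\<dots> = (if x = y then a u else 0)" by simp
    finally show ?thesis using Cons by simp
  qed
qed

lemma fmul_mono: "fmul (mono u) (mono v) = (mono (u @ v) :: nat list \<Rightarrow> 'k::field)"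
proof (rule ext)
  fix w
  have "fmul (mono u) (mono v) w = (\<Sum>m\<le>length w. if m = length u \<and> w = u @ v then (1::'k) else 0)"
    unfolding fmul_def
  proof (rule sum.cong)
    fix m assume m: "m \<in> {..length w}"
    have "(take m w = u \<and> drop m w = v) \<longleftrightarrow> (m = length u \<and> w = u @ v)"
    proof
      assume h: "take m w = u \<and> drop m w = v"
      then have "length u = m" using m by auto
      moreover have "w = u @ v" using h by (metis append_take_drop_id)
      ultimately show "m = length u \<and> w = u @ v" by simp
    next
      assume "m = length u \<and> w = u @ v"
      then show "take m w = u \<and> drop m w = v" by simp
    qed
    then show "mono u (take m w) * mono v (drop m w) = (if m = length u \<and> w = u @ v then (1::'k) else 0)"
      unfolding mono_def by auto
  qed simp
  also have "\<dots> = mono (u @ v) w" unfolding mono_def by auto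
  finally show "fmul (mono u) (mono v) w = (mono (u @ v) w :: 'k)" .
qed

lemma supp_fmul: "fmul f g w \<noteq> 0 \<Longrightarrow> \<exists>u v. w = u @ v \<and> f u \<noteq> 0 \<and> g v \<noteq> 0"
proof -
  assume "fmul f g w \<noteq> 0"
  then obtain m where "f (take m w) * g (drop m w) \<noteq> 0"
    unfolding fmul_def by (meson sum.not_neutral_contains_not_neutral)
  then show ?thesis by (intro exI[of _ "take m w"] exI[of _ "drop m w"]) auto
qed

lemma lspan_sub_wspan:
  assumes "B \<subseteq> wspan P"
  shows "lspan B \<subseteq> wspan P"
proof
  fix f assume "f \<in> lspan B"
  then obtain T c where f: "f = (\<lambda>w. \<Sum>b\<in>T. c b * b w)" and T: "finite T" "T \<subseteq> B"
    unfolding lspan_def by blast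
  have sub: "{w. f w \<noteq> 0} \<subseteq> (\<Union>b\<in>T. {w. b w \<noteq> 0})"
  proof
    fix w assume "w \<in> {w. f w \<noteq> 0}"
    then obtain b where "b \<in> T" "c b * b w \<noteq> 0" unfolding f
      by (auto intro: sum.not_neutral_contains_not_neutral)
    then show "w \<in> (\<Union>b\<in>T. {w. b w \<noteq> 0})" by auto
  qed
  have "\<forall>b\<in>T. finite {w. b w \<noteq> 0} \<and> {w. b w \<noteq> 0} \<subseteq> P"
    using T assms unfolding wspan_def by blast
  then have "finite (\<Union>b\<in>T. {w. b w \<noteq> 0})" "(\<Union>b\<in>T. {w. b w \<noteq> 0}) \<subseteq> P"
    using T by auto
  then show "f \<in> wspan P" unfolding wspan_def using sub
    by (auto intro: finite_subset)
qed

lemma B_sub_lspan: "B \<subseteq> lspan B"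
proof
  fix b assume "b \<in> B"
  then show "b \<in> lspan B" unfolding lspan_def
    by (intro CollectI exI[of _ "{b}"] exI[of _ "\<lambda>_. 1"]) auto
qed

lemma wspan_sub_lspan:
  assumes "\<And>w. w \<in> P \<Longrightarrow> (mono w :: nat list \<Rightarrow> 'k::field) \<in> B"
  shows "(wspan P :: (nat list \<Rightarrow> 'k::field) set) \<subseteq> lspan B"
proof
  fix f :: "nat list \<Rightarrow> 'k" assume "f \<in> wspan P"
  then have A: "finite {w. f w \<noteq> 0}" "{w. f w \<noteq> 0} \<subseteq> P" unfolding wspan_def by auto
  define A where "A = {w. f w \<noteq> 0}"
  define c where "c = (\<lambda>b. f (inv (mono :: nat list \<Rightarrow> nat list \<Rightarrow> 'k) b))"
  have "f = (\<lambda>w. \<Sum>b\<in>mono ` A. c b * b w)"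
  proof (rule ext)
    fix w
    have "(\<Sum>b\<in>mono ` A. c b * b w) = (\<Sum>u\<in>A. c (mono u) * mono u w)"
      by (subst sum.reindex) (auto intro: inj_on_subset[OF mono_inj])
    also have "\<dots> = (\<Sum>u\<in>A. if u = w then f w else 0)"
    proof (rule sum.cong)
      fix u
      have "c (mono u) = f u" by (simp add: c_def inv_f_f[OF mono_inj])
      then show "c (mono u) * mono u w = (if u = w then f w else 0)" by (simp add: mono_def)
    qed simp
    also have "\<dots> = f w" using A by (simp add: A_def)
    finally show "f w = (\<Sum>b\<in>mono ` A. c b * b w)" by simp
  qed
  moreover have "mono ` A \<subseteq> B" using A assms unfolding A_def by blast
  moreover have "finite (mono ` A)" using A unfolding A_def by simp
  ultimately show "f \<in> lspan B" unfolding lspan_def by blast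
qed

lemma supp_fmul_var: "{w. fmul (var y) a w \<noteq> 0} = Cons y ` {u. a u \<noteq> 0}"
  unfolding fmul_var by (auto simp: image_iff) (metis list.collapse)

lemma flag_eq:
  fixes K :: "'k::field itself"
  assumes S: "S \<subseteq> {1..n} \<times> {1..n}" and ys: "set ys \<subseteq> {1..n}" and m: "m \<le> length ys"
  shows "flag_ideal K n S ys m = wspan (PW S ys m n)"
proof
  let ?B1 = "{fmul (var (ys ! l)) a | l a. l < m \<and> a \<in> free_alg K n}"
  let ?B2 = "{fmul (fmul a (fmul (var i) (var j))) b | a b i j.
       a \<in> free_alg K n \<and> b \<in> free_alg K n \<and> (i, j) \<in> S}"
  have B1: "?B1 \<subseteq> wspan (PW S ys m n)"
  proof
    fix g assume "g \<in> ?B1"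
    then obtain l a where g: "g = fmul (var (ys ! l)) a" and l: "l < m" and a: "a \<in> free_alg K n"
      by blast
    have "ys ! l \<in> set ys" using l m by simp
    then have yl1: "ys ! l \<in> {1..n}" using ys by blast
    have yl2: "ys ! l \<in> set (take m ys)" using l m
      by (auto simp: in_set_conv_nth intro!: exI[of _ l])
    note yl = yl1 yl2
    have af: "finite {w. a w \<noteq> 0}" "{w. a w \<noteq> 0} \<subseteq> lists {1..n}" using a unfolding free_alg_def by auto
    have "Cons (ys ! l) ` {w. a w \<noteq> 0} \<subseteq> PW S ys m n"
    proof
      fix w assume "w \<in> Cons (ys ! l) ` {w. a w \<noteq> 0}"
      then obtain u where "w = ys ! l # u" "u \<in> lists {1..n}" using af(2) by blast
      then show "w \<in> PW S ys m n" using yl unfolding PW_def by simp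
    qed
    then show "g \<in> wspan (PW S ys m n)" using af(1) unfolding g wspan_def mem_Collect_eq supp_fmul_var
      by simp
  qed
  have B2: "?B2 \<subseteq> wspan (PW S ys m n)"
  proof
    fix g assume "g \<in> ?B2"
    then obtain a b i j where g: "g = fmul (fmul a (fmul (var i) (var j))) b"
      and a: "a \<in> free_alg K n" and b: "b \<in> free_alg K n" and ij: "(i, j) \<in> S" by blast
    have ij': "i \<in> {1..n}" "j \<in> {1..n}" using ij S by auto
    have vv: "fmul (var i) (var j) = (mono [i, j] :: nat list \<Rightarrow> 'k)"
      unfolding var_def by (simp add: fmul_mono)
    have sub: "{w. g w \<noteq> 0} \<subseteq> (\<lambda>(u, v). u @ [i, j] @ v) ` ({u. a u \<noteq> 0} \<times> {v. b v \<noteq> 0})"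
    proof
      fix w assume "w \<in> {w. g w \<noteq> 0}"
      then obtain p v where "w = p @ v" "fmul a (mono [i, j]) p \<noteq> 0" "b v \<noteq> 0"
        unfolding g vv using supp_fmul by blast
      moreover obtain u q where "p = u @ q" "a u \<noteq> 0" "(mono [i,j] :: nat list \<Rightarrow> 'k) q \<noteq> 0"
        using supp_fmul[OF calculation(2)] by blast
      ultimately show "w \<in> (\<lambda>(u, v). u @ [i, j] @ v) ` ({u. a u \<noteq> 0} \<times> {v. b v \<noteq> 0})"
        by (auto simp: mono_def split: if_splits)
    qed
    have fin: "finite {w. g w \<noteq> 0}"
      using a b unfolding free_alg_def by (auto intro: finite_subset[OF sub])
    have "{w. g w \<noteq> 0} \<subseteq> PW S ys m n"
    proof
      fix w assume "w \<in> {w. g w \<noteq> 0}"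
      then have "w \<in> (\<lambda>(u, v). u @ [i, j] @ v) ` ({u. a u \<noteq> 0} \<times> {v. b v \<noteq> 0})"
        by (rule subsetD[OF sub])
      then obtain p where p: "w = (\<lambda>(u, v). u @ [i, j] @ v) p" "p \<in> {u. a u \<noteq> 0} \<times> {v. b v \<noteq> 0}"
        by (rule imageE)
      obtain u v where "p = (u, v)" by (cases p)
      then have uv: "w = u @ [i, j] @ v" "a u \<noteq> 0" "b v \<noteq> 0" using p by auto
      have "u \<in> lists {1..n}" "v \<in> lists {1..n}" using a b uv by (auto simp: free_alg_def)
      then show "w \<in> PW S ys m n" using hasf_app[OF ij] ij' uv(1) by (simp add: PW_def)
    qed
    then show "g \<in> wspan (PW S ys m n)" using fin unfolding wspan_def by blast
  qed
  show "flag_ideal K n S ys m \<subseteq> wspan (PW S ys m n)"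
    unfolding flag_ideal_def mon_ideal_def
    by (rule lspan_sub_wspan) (use B1 lspan_sub_wspan[OF B2] in blast)
  show "wspan (PW S ys m n) \<subseteq> flag_ideal K n S ys m"
    unfolding flag_ideal_def mon_ideal_def
  proof (rule wspan_sub_lspan)
    fix w assume w: "w \<in> PW S ys m n"
    then have wl: "w \<in> lists {1..n}" unfolding PW_def by auto
    show "mono w \<in> ?B1 \<union> lspan ?B2"
    proof (cases "hasf S w")
      case True
      then obtain u i j v where wu: "w = u @ [i, j] @ v" "(i, j) \<in> S" using hasf_split by blast
      have eq: "mono w = fmul (fmul (mono u) (fmul (var i) (var j))) (mono v)"
        unfolding wu var_def by (simp add: fmul_mono)
      have mu: "mono u \<in> free_alg K n" and mv: "mono v \<in> free_alg K n"
        using wl wu unfolding free_alg_def by (auto simp: supp_mono)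
      have "mono w \<in> ?B2" unfolding mem_Collect_eq
        by (intro exI[of _ "mono u"] exI[of _ "mono v"] exI[of _ i] exI[of _ j] conjI eq mu mv wu(2))
      then show ?thesis by (rule UnI2[OF subsetD[OF B_sub_lspan]])
    next
      case False
      then obtain x u where wu: "w = x # u" "x \<in> set (take m ys)" using w unfolding PW_def
        by (cases w) auto
      then obtain l where l: "l < m" "x = ys ! l" by (auto simp: in_set_conv_nth)
      have "mono w = fmul (var (ys ! l)) (mono u)"
        unfolding wu var_def l(2) by (simp add: fmul_mono)
      moreover have "mono u \<in> free_alg K n"
        using wl wu unfolding free_alg_def by (auto simp: supp_mono)
      ultimately have "mono w \<in> ?B1" using l(1) unfolding mem_Collect_eq
        by (intro exI[of _ l] exI[of _ "mono u"] conjI) assumption+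
      then show ?thesis by (rule UnI1)
    qed
  qed
qed

lemma colon_eq:
  fixes K :: "'k::field itself"
  assumes y: "y \<in> {1..n}" "y \<notin> set (take m ys)"
  shows "{a \<in> free_alg K n. fmul (var y) a \<in> wspan (PW S ys m n)}
     = wspan {u \<in> lists {1..n}. hasf S (y # u)}"
proof -
  have "(a \<in> free_alg K n \<and> fmul (var y) a \<in> wspan (PW S ys m n)) \<longleftrightarrow>
        a \<in> wspan {u \<in> lists {1..n}. hasf S (y # u)}" for a :: "nat list \<Rightarrow> 'k"
  proof -
    let ?A = "{w. a w \<noteq> 0}"
    have "fmul (var y) a \<in> wspan (PW S ys m n) \<longleftrightarrow> finite (Cons y ` ?A) \<and> Cons y ` ?A \<subseteq> PW S ys m n"
      by (simp only: wspan_def mem_Collect_eq supp_fmul_var)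
    also have "\<dots> \<longleftrightarrow> finite ?A \<and> (\<forall>u\<in>?A. u \<in> lists {1..n} \<and> hasf S (y # u))"
      using y by (auto simp: finite_image_iff PW_def) (metis atLeastAtMost_iff in_listsD)+
    finally show ?thesis unfolding free_alg_def wspan_def by (simp add: subset_iff) blast
  qed
  then show ?thesis by blast
qed

lemma zs_nth: "k \<in> {1..n} \<Longrightarrow> rev [1..<n+1] ! (k-1) = n+1-k"
proof -
  assume k: "k \<in> {1..n}"
  have "rev [1..<n+1] ! (k-1) = [1..<n+1] ! (length [1..<n+1] - Suc (k-1))"
    by (rule rev_nth) (use k in \<open>simp only: length_upt, auto\<close>)
  also have "\<dots> = [1..<n+1] ! (n - k)" using k by (simp only: length_upt, auto)
  also have "\<dots> = 1 + (n - k)" using k by (subst nth_upt) auto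
  finally show ?thesis using k by auto
qed

lemma zs_take: "m \<le> n \<Longrightarrow> set (take m (rev [1..<n+1])) = {n+1-m..n}"
proof -
  assume m: "m \<le> n"
  have "take m (rev [1..<n+1]) = rev (drop (length [1..<n+1] - m) [1..<n+1])" by (rule take_rev)
  also have "\<dots> = rev [1 + (n - m)..<n+1]" by (simp only: length_upt drop_upt) (use m in simp)
  finally show ?thesis using m by (simp only: set_rev set_upt) auto
qed

lemma zs_set: "set (rev [1..<n+1]) = {1..n}"
  by (simp only: set_rev set_upt) auto

lemma zs_len: "length (rev [1..<n+1]) = n"
  by (metis length_rev length_upt diff_add_inverse2)

theorem mainTheorem9:
  fixes n :: nat and S :: "(nat \<times> nat) set"
  assumes "S \<subseteq> {1..n} \<times> {1..n}"
    and "init_koszul_mon TYPE('k::field) n S [1..<n+1]"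
  shows "init_koszul_mon TYPE('k) n (dual_rel n S) (rev [1..<n+1])"
proof -
  let ?ys = "[1..<n+1]" and ?zs = "rev [1..<n+1]" and ?S' = "dual_rel n S"
  have tk: "take m [1..<n+1] = [1..<m+1]" if "m \<le> n" for m using that by (subst take_upt) auto
  have hyp: "\<exists>j\<le>n. \<forall>i\<in>{1..n}. (k, i) \<in> S \<longleftrightarrow> i \<le> j" if k: "k \<in> {1..n}" for k
  proof -
    have kk: "k \<in> {1..length ?ys}" using k by simp
    have "\<exists>j\<le>length ?ys. {a \<in> free_alg TYPE('k) n. fmul (var (?ys ! (k - 1))) a \<in> flag_ideal TYPE('k) n S ?ys (k - 1)}
          = flag_ideal TYPE('k) n S ?ys j"
      using assms(2) kk unfolding init_koszul_mon_def by blast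
    then obtain j where j0: "j \<le> length ?ys"
      and eq: "{a \<in> free_alg TYPE('k) n. fmul (var (?ys ! (k - 1))) a \<in> flag_ideal TYPE('k) n S ?ys (k - 1)}
          = flag_ideal TYPE('k) n S ?ys j"
      by blast
    have j: "j \<le> n" using j0 by (simp del: upt_Suc)
    have yk: "?ys ! (k - 1) = k" using k by (simp del: upt_Suc)
    have "(wspan {u \<in> lists {1..n}. hasf S (k # u)} :: (nat list \<Rightarrow> 'k) set) = wspan (PW S ?ys j n)"
    proof -
      have c1: "flag_ideal TYPE('k) n S ?ys (k-1) = wspan (PW S ?ys (k-1) n)"
        by (rule flag_eq[OF assms(1)]) (use k in auto)
      have c2: "flag_ideal TYPE('k) n S ?ys j = wspan (PW S ?ys j n)"
        by (rule flag_eq[OF assms(1)]) (use j in auto)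
      have kn: "k \<notin> set (take (k-1) ?ys)" using k by (subst tk) auto
      show ?thesis using eq unfolding yk c1 c2 colon_eq[OF k kn] .
    qed
    then have P: "{u \<in> lists {1..n}. hasf S (k # u)} = PW S ?ys j n" by (rule wspan_inj)
    have "(k, i) \<in> S \<longleftrightarrow> i \<le> j" if i: "i \<in> {1..n}" for i
    proof -
      have "[i] \<in> {u \<in> lists {1..n}. hasf S (k # u)} \<longleftrightarrow> [i] \<in> PW S ?ys j n" using P by simp
      then show ?thesis using i j by (simp add: hasf_Cons PW_def tk less_Suc_eq_le del: upt_Suc)
    qed
    then show ?thesis using j by blast
  qed
  have S': "?S' \<subseteq> {1..n} \<times> {1..n}" unfolding dual_rel_def by auto
  show ?thesis unfolding init_koszul_mon_def
  proof (intro conjI ballI)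
    show "distinct ?zs" by simp
    show "set ?zs = {1..n}" by (rule zs_set)
    fix k assume k0: "k \<in> {1..length ?zs}"
    have k: "k \<in> {1..n}" using k0 by (simp only: zs_len)
    define y where "y = n + 1 - k"
    have yk: "?zs ! (k - 1) = y" using zs_nth[OF k] by (simp add: y_def)
    have y: "y \<in> {1..n}" using k by (auto simp: y_def)
    obtain j where j: "j \<le> n" and jS: "\<forall>i\<in>{1..n}. (y, i) \<in> S \<longleftrightarrow> i \<le> j" using hyp[OF y] by blast
    have tz: "set (take m ?zs) = {n+1-m..n}" if "m \<le> n" for m
      using that by (rule zs_take)
    have yn: "y \<notin> set (take (k - 1) ?zs)" using k by (subst tz) (auto simp: y_def)
    have "{u \<in> lists {1..n}. hasf ?S' (y # u)} = PW ?S' ?zs (n - j) n"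
    proof (rule set_eqI)
      fix u show "u \<in> {u \<in> lists {1..n}. hasf ?S' (y # u)} \<longleftrightarrow> u \<in> PW ?S' ?zs (n - j) n"
      proof (cases u)
        case Nil then show ?thesis by (simp add: hasf_Cons PW_def)
      next
        case (Cons x v)
        show ?thesis
        proof (cases "x \<in> {1..n}")
          case True
          then have yx: "(y, x) \<in> ?S' \<longleftrightarrow> x \<in> {n + 1 - (n - j)..n}"
            using jS y j unfolding dual_rel_def by auto
          have tj: "set (take (n - j) ?zs) = {n + 1 - (n - j)..n}" by (rule tz) simp
          have hc: "hasf ?S' (y # u) \<longleftrightarrow> hasf ?S' u \<or> (y, x) \<in> ?S'"
            unfolding Cons hasf_Cons[of _ y] by simp
          have "u \<noteq> []" "hd u = x" using Cons by simp_all
          then show ?thesis unfolding PW_def mem_Collect_eq tj hc yx by blast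
        next
          case False then show ?thesis using Cons unfolding PW_def by auto
        qed
      qed
    qed
    note Qeq = this
    have "{a \<in> free_alg TYPE('k) n. fmul (var (?zs ! (k - 1))) a \<in> flag_ideal TYPE('k) n ?S' ?zs (k - 1)}
          = flag_ideal TYPE('k) n ?S' ?zs (n - j)"
    proof -
      have c1: "flag_ideal TYPE('k) n ?S' ?zs (k-1) = wspan (PW ?S' ?zs (k-1) n)"
        using k by (intro flag_eq[OF S']) (subst zs_set, rule order_refl, subst zs_len, auto)
      have c2: "flag_ideal TYPE('k) n ?S' ?zs (n - j) = wspan (PW ?S' ?zs (n - j) n)"
        by (intro flag_eq[OF S']) (subst zs_set, rule order_refl, subst zs_len, simp)
      show ?thesis unfolding yk c1 c2 colon_eq[OF y yn] Qeq by (rule refl)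
    qed
    then show "\<exists>j\<le>length ?zs. {a \<in> free_alg TYPE('k) n. fmul (var (?zs ! (k - 1))) a \<in> flag_ideal TYPE('k) n ?S' ?zs (k - 1)}
          = flag_ideal TYPE('k) n ?S' ?zs j" by (intro exI[of _ "n - j"]) (simp only: zs_len, auto)
  qed
qed

end
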